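(* Let $k\ge 1$ and $\delta>0$. For every $\varepsilon>0$ there is $N_0$ such that for every $N\ge N_0$ divisible by $k$ and every collection $\mathcal{A}\subseteq\mathcal{P}(N)$ that is $k$-large in $N$ and upward closed, if $Z$ is a uniformly random $N/k$-element subset of $N=\{0,\dots,N-1\}$, then with probability at least $1-\varepsilon$ there exists $A\subseteq N$ with $|A|<\delta N$ and $A\cup Z\in\mathcal{A}$.
   Context: Identify $N$ with $\{0,\dots,N-1\}$. A collection $\mathcal{A}\subseteq\mathcal{P}(N)$ is $k$-large in $N$ if for every partition of $N$ into $k$ pieces $N_0,\dots,N_{k-1}$ there is $i<k$ with $N_i\in\mathcal{A}$. $\mathcal{A}$ is upward closed if $B\in\mathcal{A}$ and $B\subseteq A\subseteq N$ imply $A\in\mathcal{A}$. *)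

theory Defs
  imports "HOL-Probability.Probability"
begin

definition is_partition_k :: "nat \<Rightarrow> nat \<Rightarrow> (nat \<Rightarrow> nat set) \<Rightarrow> bool" where
  "is_partition_k N k P \<longleftrightarrow>
     (\<Union>i<k. P i) = {..<N} \<and> (\<forall>i<k. \<forall>j<k. i \<noteq> j \<longrightarrow> P i \<inter> P j = {})"

definition k_large :: "nat \<Rightarrow> nat \<Rightarrow> nat set set \<Rightarrow> bool" where
  "k_large k N \<A> \<longleftrightarrow> (\<forall>P. is_partition_k N k P \<longrightarrow> (\<exists>i<k. P i \<in> \<A>))"

definition upward_closed :: "nat \<Rightarrow> nat set set \<Rightarrow> bool" where
  "upward_closed N \<A> \<longleftrightarrow> (\<forall>B A. B \<in> \<A> \<longrightarrow> B \<subseteq> A \<longrightarrow> A \<subseteq> {..<N} \<longrightarrow> A \<in> \<A>)"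

end

theory Submission
  imports Defs "HOL-Real_Asymp.Real_Asymp"
begin

definition wt :: "real \<Rightarrow> nat set \<Rightarrow> nat set \<Rightarrow> real" where
  "wt p I x = p ^ card x * (1 - p) ^ (card I - card x)"

definition hdist :: "nat set \<Rightarrow> nat set set \<Rightarrow> nat" where
  "hdist x S = Min ((\<lambda>y. card ((x - y) \<union> (y - x))) ` S)"

definition muS :: "real \<Rightarrow> nat set \<Rightarrow> nat set set \<Rightarrow> real" where
  "muS p I S = (\<Sum>x\<in>Pow I. if x \<in> S then wt p I x else 0)"

definition Fexp :: "real \<Rightarrow> real \<Rightarrow> nat set \<Rightarrow> nat set set \<Rightarrow> real" where
  "Fexp l p I S = (\<Sum>x\<in>Pow I. wt p I x * exp (l * real (hdist x S)))"

definition Cc :: "real \<Rightarrow> real" where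
  "Cc l = (1 + exp l)^2 / (4 * exp l)"

lemma sum_Pow_insert:
  assumes "finite I" "i \<notin> I"
  shows "(\<Sum>x\<in>Pow (insert i I). f x) = (\<Sum>y\<in>Pow I. f y) + (\<Sum>y\<in>Pow I. f (insert i y))"
proof -
  have d: "Pow I \<inter> insert i ` Pow I = {}" using assms by auto
  have inj: "inj_on (insert i) (Pow I)" using assms unfolding inj_on_def by (auto simp: insert_eq_iff)
  have "(\<Sum>x\<in>Pow (insert i I). f x) = (\<Sum>x\<in>Pow I \<union> insert i ` Pow I. f x)"
    by (simp add: Pow_insert)
  also have "\<dots> = (\<Sum>y\<in>Pow I. f y) + (\<Sum>x\<in>insert i ` Pow I. f x)"
    using assms d by (intro sum.union_disjoint) auto
  also have "(\<Sum>x\<in>insert i ` Pow I. f x) = (\<Sum>y\<in>Pow I. f (insert i y))"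
    using inj by (simp add: sum.reindex)
  finally show ?thesis .
qed

lemma wt_nonneg: "0 \<le> p \<Longrightarrow> p \<le> 1 \<Longrightarrow> 0 \<le> wt p I x"
  unfolding wt_def by simp

lemma wt_ins0:
  assumes "finite I" "i \<notin> I" "y \<subseteq> I"
  shows "wt p (insert i I) y = (1 - p) * wt p I y"
proof -
  have "card y \<le> card I" using assms card_mono by blast
  then have "card (insert i I) - card y = Suc (card I - card y)" using assms by simp
  then show ?thesis unfolding wt_def by simp
qed

lemma wt_ins1:
  assumes "finite I" "i \<notin> I" "y \<subseteq> I"
  shows "wt p (insert i I) (insert i y) = p * wt p I y"
proof -
  have fy: "finite y" using assms finite_subset by blast
  have iy: "i \<notin> y" using assms by blast
  have "card (insert i I) - card (insert i y) = card I - card y" using assms fy iy by simp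
  moreover have "card (insert i y) = Suc (card y)" using fy iy by simp
  ultimately show ?thesis unfolding wt_def by simp
qed

lemma hdist_le: "finite S \<Longrightarrow> z \<in> S \<Longrightarrow> hdist x S \<le> card ((x - z) \<union> (z - x))"
  unfolding hdist_def by (rule Min_le) auto

lemma hdist_in: "finite S \<Longrightarrow> S \<noteq> {} \<Longrightarrow> \<exists>z\<in>S. hdist x S = card ((x - z) \<union> (z - x))"
proof -
  assume "finite S" "S \<noteq> {}"
  then have "hdist x S \<in> (\<lambda>y. card ((x - y) \<union> (y - x))) ` S"
    unfolding hdist_def by (intro Min_in) auto
  then show ?thesis by auto
qed

lemma real_step:
  fixes a b F E l :: real
  assumes "b > 0" "0 \<le> a" "a \<le> b" "F \<ge> 0" "a * F \<le> E" "b * F \<le> exp l * E" "E \<ge> 0"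
  shows "b * b * F \<le> E * (b + exp l * (b - a))"
proof (cases "exp l * a \<le> b")
  case True
  have "b * b * F \<le> b * (exp l * E)" using assms by (simp add: mult_left_mono mult.assoc)
  also have "\<dots> \<le> E * (b + exp l * (b - a))"
  proof -
    have "exp l * E * b \<le> E * (b + exp l * b - exp l * a)"
    proof -
      have "E * (b + exp l * b - exp l * a) - exp l * E * b = E * (b - exp l * a)" by (simp add: algebra_simps)
      moreover have "E * (b - exp l * a) \<ge> 0" using True assms by simp
      ultimately show ?thesis by linarith
    qed
    then show ?thesis by (simp add: algebra_simps)
  qed
  finally show ?thesis .
next
  case False
  then have ea: "b < exp l * a" by simp
  have apos: "a > 0"
  proof (rule ccontr)
    assume "\<not> a > 0"
    then have "a \<le> 0" by simp
    then have "exp l * a \<le> 0" by (simp add: mult_nonneg_nonpos)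
    then show False using ea assms(1) by linarith
  qed
  have "b * (b - a) \<le> exp l * a * (b - a)" using ea assms by (intro mult_right_mono) auto
  then have k: "b * b \<le> a * (b + exp l * (b - a))" by (simp add: algebra_simps)
  have "a * (b * b * F) = (b * b) * (a * F)" by (simp add: algebra_simps)
  also have "\<dots> \<le> (b * b) * E" using assms by (intro mult_left_mono) auto
  also have "\<dots> \<le> a * (b + exp l * (b - a)) * E" using k assms by (intro mult_right_mono) auto
  finally have "a * (b * b * F) \<le> a * (E * (b + exp l * (b - a)))" by (simp add: algebra_simps)
  then show ?thesis using apos by simp
qed

lemma real_combine:
  fixes a0 a1 b F0 F1 E l p :: real
  assumes "b > 0" "0 \<le> a0" "a0 \<le> b" "0 \<le> a1" "a1 \<le> b" "F0 \<ge> 0" "F1 \<ge> 0"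
    "a0 * F0 \<le> E" "b * F0 \<le> exp l * E" "a1 * F1 \<le> E" "b * F1 \<le> exp l * E" "E \<ge> 0"
    "0 \<le> p" "p \<le> 1"
  shows "((1 - p) * a0 + p * a1) * ((1 - p) * F0 + p * F1) \<le> E * Cc l"
proof -
  define s where "s = (1 - p) * a0 + p * a1"
  define G where "G = (1 - p) * F0 + p * F1"
  have h0: "b * b * F0 \<le> E * (b + exp l * (b - a0))" using real_step assms by blast
  have h1: "b * b * F1 \<le> E * (b + exp l * (b - a1))" using real_step assms by blast
  have hG: "b * b * G \<le> E * (b + exp l * (b - s))"
  proof -
    have "b * b * G = (1 - p) * (b * b * F0) + p * (b * b * F1)" unfolding G_def by (simp add: algebra_simps)
    also have "\<dots> \<le> (1 - p) * (E * (b + exp l * (b - a0))) + p * (E * (b + exp l * (b - a1)))"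
      using h0 h1 assms by (intro add_mono mult_left_mono) auto
    also have "\<dots> = E * (b + exp l * (b - s))" unfolding s_def by (simp add: algebra_simps)
    finally show ?thesis .
  qed
  have s0: "s \<ge> 0" unfolding s_def using assms by simp
  have "b * b * (s * G) = s * (b * b * G)" by (simp add: algebra_simps)
  also have "\<dots> \<le> s * (E * (b + exp l * (b - s)))" using hG s0 by (intro mult_left_mono) auto
  also have "\<dots> \<le> b * b * (E * Cc l)"
  proof -
    have el: "exp l > 0" by simp
    have "s * (b + exp l * (b - s)) * (4 * exp l) \<le> b * b * (1 + exp l)^2"
    proof -
      have "b * b * (1 + exp l)^2 - s * (b + exp l * (b - s)) * (4 * exp l) = (b * (1 + exp l) - 2 * exp l * s)^2"
        by (simp add: power2_eq_square algebra_simps)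
      moreover have "0 \<le> (b * (1 + exp l) - 2 * exp l * s)^2" by simp
      ultimately show ?thesis by linarith
    qed
    then have "s * (b + exp l * (b - s)) \<le> b * b * Cc l"
      unfolding Cc_def using el by (simp add: field_simps)
    then have "E * (s * (b + exp l * (b - s))) \<le> E * (b * b * Cc l)" using assms by (intro mult_left_mono) auto
    then show ?thesis by (simp add: algebra_simps)
  qed
  finally have "b * b * (s * G) \<le> b * b * (E * Cc l)" .
  then have "s * G \<le> E * Cc l" using assms by (simp add: mult_le_cancel_left)
  then show ?thesis unfolding s_def G_def .
qed

lemma muS_mono: "A \<subseteq> B \<Longrightarrow> finite I \<Longrightarrow> 0 \<le> p \<Longrightarrow> p \<le> 1 \<Longrightarrow> muS p I A \<le> muS p I B"
  unfolding muS_def by (intro sum_mono) (auto simp: wt_nonneg)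

lemma muS_nonneg: "finite I \<Longrightarrow> 0 \<le> p \<Longrightarrow> p \<le> 1 \<Longrightarrow> 0 \<le> muS p I A"
  unfolding muS_def by (intro sum_nonneg) (auto simp: wt_nonneg)

lemma Fexp_nonneg: "finite I \<Longrightarrow> 0 \<le> p \<Longrightarrow> p \<le> 1 \<Longrightarrow> 0 \<le> Fexp l p I A"
  unfolding Fexp_def by (intro sum_nonneg) (auto simp: wt_nonneg)

lemma Cc_pos: "Cc l > 0"
proof -
  have "1 + exp l > 0" by (simp add: add_pos_pos)
  then show ?thesis unfolding Cc_def by (intro divide_pos_pos zero_less_power) auto
qed

lemma symdiff_ins: "i \<notin> y \<Longrightarrow> i \<notin> z \<Longrightarrow> (insert i y - insert i z) \<union> (insert i z - insert i y) = (y - z) \<union> (z - y)"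
  by auto

lemma symdiff_ins1: "i \<notin> y \<Longrightarrow> i \<notin> z \<Longrightarrow> (y - insert i z) \<union> (insert i z - y) = insert i ((y - z) \<union> (z - y))"
  by auto

lemma symdiff_ins2: "i \<notin> y \<Longrightarrow> i \<notin> z \<Longrightarrow> (insert i y - z) \<union> (z - insert i y) = insert i ((y - z) \<union> (z - y))"
  by auto

lemma conc:
  assumes "finite I" "S \<subseteq> Pow I" "S \<noteq> {}" "0 \<le> p" "p \<le> 1" "0 \<le> l"
  shows "muS p I S * Fexp l p I S \<le> Cc l ^ card I"
  using assms(1-3)
proof (induction I arbitrary: S rule: finite_induct)
  case empty
  then have "S = {{}}" by auto
  then show ?case by (simp add: muS_def Fexp_def wt_def hdist_def)
next
  case (insert i I S)
  define J where "J = insert i I"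
  define S0 where "S0 = {y \<in> Pow I. y \<in> S}"
  define S1 where "S1 = {y \<in> Pow I. insert i y \<in> S}"
  define U where "U = S0 \<union> S1"
  define E where "E = Cc l ^ card I"
  define F0 where "F0 = (\<Sum>y\<in>Pow I. wt p I y * exp (l * real (hdist y S)))"
  define F1 where "F1 = (\<Sum>y\<in>Pow I. wt p I y * exp (l * real (hdist (insert i y) S)))"
  have finJ: "finite J" using insert unfolding J_def by simp
  have finS: "finite S" using insert(4) finJ unfolding J_def by (meson finite_Pow_iff finite_subset)
  have fin0: "finite S0" "finite S1" "finite U" unfolding S0_def S1_def U_def using insert(1) by auto
  have sub: "S0 \<subseteq> Pow I" "S1 \<subseteq> Pow I" "U \<subseteq> Pow I" unfolding S0_def S1_def U_def by auto
  have E0: "E \<ge> 0" unfolding E_def by (intro zero_le_power less_imp_le[OF Cc_pos])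
  have muJ: "muS p J S = (1 - p) * muS p I S0 + p * muS p I S1"
  proof -
    have "muS p J S = (\<Sum>y\<in>Pow I. if y \<in> S then wt p J y else 0) + (\<Sum>y\<in>Pow I. if insert i y \<in> S then wt p J (insert i y) else 0)"
      unfolding muS_def J_def using insert(1,2) by (rule sum_Pow_insert)
    also have "(\<Sum>y\<in>Pow I. if y \<in> S then wt p J y else 0) = (1 - p) * muS p I S0"
      unfolding muS_def sum_distrib_left J_def S0_def using insert(1,2)
      by (intro sum.cong) (auto simp: wt_ins0)
    also have "(\<Sum>y\<in>Pow I. if insert i y \<in> S then wt p J (insert i y) else 0) = p * muS p I S1"
      unfolding muS_def sum_distrib_left J_def S1_def using insert(1,2)
      by (intro sum.cong) (auto simp: wt_ins1)
    finally show ?thesis .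
  qed
  have FJ: "Fexp l p J S = (1 - p) * F0 + p * F1"
  proof -
    have "Fexp l p J S = (\<Sum>y\<in>Pow I. wt p J y * exp (l * real (hdist y S))) + (\<Sum>y\<in>Pow I. wt p J (insert i y) * exp (l * real (hdist (insert i y) S)))"
      unfolding Fexp_def J_def using insert(1,2) by (rule sum_Pow_insert)
    also have "(\<Sum>y\<in>Pow I. wt p J y * exp (l * real (hdist y S))) = (1 - p) * F0"
      unfolding F0_def sum_distrib_left J_def using insert(1,2)
      by (intro sum.cong) (auto simp: wt_ins0)
    also have "(\<Sum>y\<in>Pow I. wt p J (insert i y) * exp (l * real (hdist (insert i y) S))) = p * F1"
      unfolding F1_def sum_distrib_left J_def using insert(1,2)
      by (intro sum.cong) (auto simp: wt_ins1)
    finally show ?thesis .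
  qed
  have Une: "U \<noteq> {}"
  proof -
    obtain x where x: "x \<in> S" using insert(5) by auto
    then have xJ: "x \<subseteq> insert i I" using insert(4) by auto
    show ?thesis
    proof (cases "i \<in> x")
      case True
      then have "x - {i} \<in> S1" unfolding S1_def using x xJ insert(2) by (auto simp: insert_absorb)
      then show ?thesis unfolding U_def by auto
    next
      case False
      then have "x \<in> S0" unfolding S0_def using x xJ by auto
      then show ?thesis unfolding U_def by auto
    qed
  qed
  have d0: "hdist y S \<le> hdist y S0" if yI: "y \<in> Pow I" and ne: "S0 \<noteq> {}" for y
  proof -
    obtain z where z: "z \<in> S0" "hdist y S0 = card ((y - z) \<union> (z - y))" using hdist_in[OF fin0(1) ne] by blast
    have "z \<in> S" using z unfolding S0_def by auto
    then show ?thesis using hdist_le[OF finS] z by metis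
  qed
  have d1: "hdist (insert i y) S \<le> hdist y S1" if yI: "y \<in> Pow I" and ne: "S1 \<noteq> {}" for y
  proof -
    obtain z where z: "z \<in> S1" "hdist y S1 = card ((y - z) \<union> (z - y))" using hdist_in[OF fin0(2) ne] by blast
    have zS: "insert i z \<in> S" "i \<notin> z" "i \<notin> y" using z yI insert(2) unfolding S1_def by auto
    then show ?thesis using hdist_le[OF finS zS(1), of "insert i y"] z symdiff_ins[OF zS(3,2)] by simp
  qed
  have dU: "hdist y S \<le> hdist y U + 1 \<and> hdist (insert i y) S \<le> hdist y U + 1" if yI: "y \<in> Pow I" for y
  proof -
    obtain z where z: "z \<in> U" "hdist y U = card ((y - z) \<union> (z - y))" using hdist_in[OF fin0(3) Une] by blast
    have iy: "i \<notin> y" "i \<notin> z" using yI z insert(2) sub by auto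
    have fsd: "finite ((y - z) \<union> (z - y))" using yI z sub insert(1) by (meson PowD finite_Diff finite_UnI finite_subset subsetD)
    have cins: "card (insert i ((y - z) \<union> (z - y))) \<le> card ((y - z) \<union> (z - y)) + 1"
      using fsd by (simp add: card_insert_le_m1)
    show ?thesis
    proof (cases "z \<in> S0")
      case True
      then have zS: "z \<in> S" unfolding S0_def by auto
      show ?thesis using hdist_le[OF finS zS, of y] hdist_le[OF finS zS, of "insert i y"] z symdiff_ins2[OF iy] cins by simp
    next
      case False
      then have "z \<in> S1" using z unfolding U_def by auto
      then have zS: "insert i z \<in> S" unfolding S1_def by auto
      show ?thesis using hdist_le[OF finS zS, of y] hdist_le[OF finS zS, of "insert i y"] z symdiff_ins1[OF iy] symdiff_ins[OF iy] cins by simp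
    qed
  qed
  have wtn: "0 \<le> wt p I y" for y using assms wt_nonneg by auto
  have F0n: "F0 \<ge> 0" "F1 \<ge> 0" unfolding F0_def F1_def using wtn by (auto intro: sum_nonneg)
  have a0n: "0 \<le> muS p I S0" "0 \<le> muS p I S1" using muS_nonneg assms insert by auto
  have ab: "muS p I S0 \<le> muS p I U" "muS p I S1 \<le> muS p I U"
    using muS_mono assms insert unfolding U_def by auto
  have IHU: "muS p I U * Fexp l p I U \<le> E" unfolding E_def using insert(3) sub Une by blast
  have FU0: "F0 \<le> exp l * Fexp l p I U" "F1 \<le> exp l * Fexp l p I U"
  proof -
    have "F0 \<le> (\<Sum>y\<in>Pow I. exp l * (wt p I y * exp (l * real (hdist y U))))" unfolding F0_def
    proof (intro sum_mono)
      fix y assume y: "y \<in> Pow I"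
      have "l * real (hdist y S) \<le> l + l * real (hdist y U)"
        using dU[OF y] assms(6) by (metis add.commute distrib_left mult.right_neutral mult_left_mono of_nat_1 of_nat_add of_nat_le_iff)
      then have "exp (l * real (hdist y S)) \<le> exp l * exp (l * real (hdist y U))" by (simp add: exp_add[symmetric])
      then show "wt p I y * exp (l * real (hdist y S)) \<le> exp l * (wt p I y * exp (l * real (hdist y U)))"
        using wtn[of y] by (metis mult.left_commute mult_left_mono)
    qed
    then show "F0 \<le> exp l * Fexp l p I U" unfolding Fexp_def by (simp add: sum_distrib_left)
    have "F1 \<le> (\<Sum>y\<in>Pow I. exp l * (wt p I y * exp (l * real (hdist y U))))" unfolding F1_def
    proof (intro sum_mono)
      fix y assume y: "y \<in> Pow I"
      have "l * real (hdist (insert i y) S) \<le> l + l * real (hdist y U)"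
        using dU[OF y] assms(6) by (metis add.commute distrib_left mult.right_neutral mult_left_mono of_nat_1 of_nat_add of_nat_le_iff)
      then have "exp (l * real (hdist (insert i y) S)) \<le> exp l * exp (l * real (hdist y U))" by (simp add: exp_add[symmetric])
      then show "wt p I y * exp (l * real (hdist (insert i y) S)) \<le> exp l * (wt p I y * exp (l * real (hdist y U)))"
        using wtn[of y] by (metis mult.left_commute mult_left_mono)
    qed
    then show "F1 \<le> exp l * Fexp l p I U" unfolding Fexp_def by (simp add: sum_distrib_left)
  qed
  have bF: "muS p I U * F0 \<le> exp l * E" "muS p I U * F1 \<le> exp l * E"
  proof -
    have "muS p I U * F0 \<le> muS p I U * (exp l * Fexp l p I U)"
      using FU0 a0n ab by (intro mult_left_mono) auto
    also have "\<dots> \<le> exp l * E" using IHU by (simp add: algebra_simps)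
    finally show "muS p I U * F0 \<le> exp l * E" .
    have "muS p I U * F1 \<le> muS p I U * (exp l * Fexp l p I U)"
      using FU0 a0n ab by (intro mult_left_mono) auto
    also have "\<dots> \<le> exp l * E" using IHU by (simp add: algebra_simps)
    finally show "muS p I U * F1 \<le> exp l * E" .
  qed
  have aF0: "muS p I S0 * F0 \<le> E"
  proof (cases "S0 = {}")
    case True then show ?thesis using E0 by (simp add: muS_def)
  next
    case False
    have IH: "muS p I S0 * Fexp l p I S0 \<le> E" unfolding E_def using insert(3) sub False by blast
    have "F0 \<le> Fexp l p I S0" unfolding F0_def Fexp_def
      using d0 False wtn assms(6) by (intro sum_mono mult_left_mono) (auto intro!: mult_left_mono)
    then have "muS p I S0 * F0 \<le> muS p I S0 * Fexp l p I S0" using a0n by (intro mult_left_mono) auto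
    then show ?thesis using IH by linarith
  qed
  have aF1: "muS p I S1 * F1 \<le> E"
  proof (cases "S1 = {}")
    case True then show ?thesis using E0 by (simp add: muS_def)
  next
    case False
    have IH: "muS p I S1 * Fexp l p I S1 \<le> E" unfolding E_def using insert(3) sub False by blast
    have "F1 \<le> Fexp l p I S1" unfolding F1_def Fexp_def
      using d1 False wtn assms(6) by (intro sum_mono mult_left_mono) (auto intro!: mult_left_mono)
    then have "muS p I S1 * F1 \<le> muS p I S1 * Fexp l p I S1" using a0n by (intro mult_left_mono) auto
    then show ?thesis using IH by linarith
  qed
  have main: "muS p J S * Fexp l p J S \<le> E * Cc l"
  proof (cases "muS p I U = 0")
    case True
    then have "muS p I S0 = 0" "muS p I S1 = 0" using ab a0n by linarith+
    then have "muS p J S = 0" using muJ by simp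
    then show ?thesis using E0 Cc_pos[of l] by simp
  next
    case False
    then have bpos: "muS p I U > 0" using a0n ab by linarith
    show ?thesis unfolding muJ FJ
      by (rule real_combine[OF bpos a0n(1) ab(1) a0n(2) ab(2) F0n aF0 bF(1) aF1 bF(2) E0 assms(4,5)])
  qed
  have "card J = Suc (card I)" unfolding J_def using insert(1,2) by simp
  then show ?case using main unfolding J_def E_def by (simp add: mult.commute)
qed


lemma card_filter_sum: "finite A \<Longrightarrow> card {x\<in>A. P x} = (\<Sum>x\<in>A. if P x then 1 else (0::nat))"
  using sum.inter_filter[of A "\<lambda>_. 1::nat" P] by simp

lemma binom_mode:
  assumes N: "0 < N" and mN: "m \<le> N"
  shows "real (N choose m) * (real m / real N) ^ m * (1 - real m / real N) ^ (N - m) \<ge> 1 / (real N + 1)"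
proof (cases "m = N")
  case True
  then show ?thesis using N by simp
next
  case False
  define p where "p = real m / real N"
  define t where "t = (\<lambda>j. real (N choose j) * p ^ j * (1 - p) ^ (N - j))"
  have p0: "0 \<le> p" unfolding p_def by simp
  have p1: "p < 1" unfolding p_def using False mN N by simp
  have pN: "p * real N = real m" unfolding p_def using N by simp
  have tn: "t j \<ge> 0" for j unfolding t_def using p0 p1 by simp
  have ident: "real (Suc j) * (1 - p) * t (Suc j) = real (N - j) * p * t j" if "j < N" for j
  proof -
    have c: "Suc j * (N choose Suc j) = (N - j) * (N choose j)"
      by (metis binomial_absorption binomial_absorb_comp)
    have e: "N - j = Suc (N - Suc j)" using that by simp
    have "real (Suc j) * (1 - p) * t (Suc j) = real (Suc j * (N choose Suc j)) * p ^ Suc j * (1 - p) ^ Suc (N - Suc j)"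
      unfolding t_def by (simp add: algebra_simps)
    also have "\<dots> = real ((N - j) * (N choose j)) * p ^ Suc j * (1 - p) ^ (N - j)"
      using c e by simp
    also have "\<dots> = real (N - j) * p * t j" by (simp only: t_def of_nat_mult power_Suc mult_ac)
    finally show ?thesis .
  qed
  have up: "t j \<le> t (Suc j)" if "Suc j \<le> m" for j
  proof -
    have jN: "j < N" using that mN by simp
    have "real (Suc j) \<le> p * (real N + 1)"
    proof -
      have "real (Suc j) \<le> real m" using that by simp
      also have "\<dots> \<le> p * (real N + 1)" using pN p0 by (simp add: algebra_simps)
      finally show ?thesis .
    qed
    then have ineq: "real (Suc j) * (1 - p) \<le> real (N - j) * p"
      using jN by (simp add: of_nat_diff algebra_simps)
    have "real (Suc j) * (1 - p) * t j \<le> real (N - j) * p * t j"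
      using ineq tn by (intro mult_right_mono) auto
    also have "\<dots> = real (Suc j) * (1 - p) * t (Suc j)" using ident[OF jN] by simp
    finally have "real (Suc j) * (1 - p) * t j \<le> real (Suc j) * (1 - p) * t (Suc j)" .
    moreover have "real (Suc j) * (1 - p) > 0" using p1 by simp
    ultimately show ?thesis by (rule mult_left_le_imp_le)
  qed
  have down: "t (Suc j) \<le> t j" if "m \<le> j" "j < N" for j
  proof -
    have "p * (real N + 1) \<le> real (Suc j)"
    proof -
      have "p * (real N + 1) = real m + p" using pN by (simp add: algebra_simps)
      also have "\<dots> \<le> real (Suc j)" using that p1 by simp
      finally show ?thesis .
    qed
    then have ineq: "real (N - j) * p \<le> real (Suc j) * (1 - p)"
      using that by (simp add: of_nat_diff algebra_simps)
    have "real (Suc j) * (1 - p) * t (Suc j) = real (N - j) * p * t j" using ident[OF that(2)] by simp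
    also have "\<dots> \<le> real (Suc j) * (1 - p) * t j"
      using ineq tn by (intro mult_right_mono) auto
    finally have "real (Suc j) * (1 - p) * t (Suc j) \<le> real (Suc j) * (1 - p) * t j" .
    moreover have "real (Suc j) * (1 - p) > 0" using p1 by simp
    ultimately show ?thesis by (rule mult_left_le_imp_le)
  qed
  have below: "d \<le> m \<longrightarrow> t (m - d) \<le> t m" for d
  proof (induction d)
    case 0 then show ?case by simp
  next
    case (Suc d)
    show ?case
    proof
      assume a: "Suc d \<le> m"
      have "t (m - Suc d) \<le> t (Suc (m - Suc d))" using up[of "m - Suc d"] a by simp
      also have "Suc (m - Suc d) = m - d" using a by simp
      finally show "t (m - Suc d) \<le> t m" using Suc a by simp
    qed
  qed
  have above: "m + d \<le> N \<longrightarrow> t (m + d) \<le> t m" for d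
  proof (induction d)
    case 0 then show ?case by simp
  next
    case (Suc d)
    show ?case
    proof
      assume a: "m + Suc d \<le> N"
      have "t (Suc (m + d)) \<le> t (m + d)" using down[of "m + d"] a by simp
      then show "t (m + Suc d) \<le> t m" using Suc a by simp
    qed
  qed
  have le: "t j \<le> t m" if "j \<le> N" for j
  proof (cases "j \<le> m")
    case True then show ?thesis using below[of "m - j"] by simp
  next
    case False then show ?thesis using above[of "j - m"] that by simp
  qed
  have "1 = (p + (1 - p)) ^ N" by simp
  also have "\<dots> = (\<Sum>j\<le>N. t j)" unfolding t_def binomial_ring by (simp add: algebra_simps)
  also have "\<dots> \<le> (\<Sum>j\<le>N. t m)" using le by (intro sum_mono) auto
  also have "\<dots> = (real N + 1) * t m" by simp
  finally have "1 / (real N + 1) \<le> t m" by (simp add: field_simps)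
  then show ?thesis unfolding t_def p_def .
qed

lemma perm_exists:
  assumes "finite U" "W \<subseteq> U" "W' \<subseteq> U" "card W = card W'"
  shows "\<exists>\<tau>. \<tau> permutes U \<and> \<tau> ` W = W'"
proof -
  have fW: "finite W" "finite W'" using assms finite_subset by auto
  obtain f where f: "bij_betw f W W'" using finite_same_card_bij[OF fW assms(4)] by blast
  have "card (U - W) = card (U - W')" using assms(2,3,4) fW by (simp only: card_Diff_subset)
  moreover have "finite (U - W)" "finite (U - W')" using assms(1) by auto
  ultimately obtain g where g: "bij_betw g (U - W) (U - W')" using finite_same_card_bij by metis
  define h where "h = (\<lambda>x. if x \<in> W then f x else if x \<in> U then g x else x)"
  have "bij_betw h W W' = bij_betw f W W'" by (rule bij_betw_cong) (simp add: h_def)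
  then have h1: "bij_betw h W W'" using f by simp
  have "bij_betw h (U - W) (U - W') = bij_betw g (U - W) (U - W')" by (rule bij_betw_cong) (simp add: h_def)
  then have h2: "bij_betw h (U - W) (U - W')" using g by simp
  have "bij_betw h (W \<union> (U - W)) (W' \<union> (U - W'))" by (rule bij_betw_combine[OF h1 h2]) auto
  moreover have "W \<union> (U - W) = U" "W' \<union> (U - W') = U" using assms by auto
  ultimately have "bij_betw h U U" by simp
  moreover have "h x = x" if "x \<notin> U" for x using that assms(2) unfolding h_def by auto
  ultimately have "h permutes U" by (intro bij_imp_permutes) auto
  moreover have "h ` W = W'" using h1 by (simp add: bij_betw_def)
  ultimately show ?thesis by blast
qed

lemma slice_density:
  fixes k m :: nat and \<A> :: "nat set set"
  assumes k: "k \<ge> 1" and kl: "k_large k (k * m) \<A>"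
  defines "N \<equiv> k * m"
  shows "card {Z. Z \<subseteq> {..<N} \<and> card Z = m} \<le> k * card (\<A> \<inter> {Z. Z \<subseteq> {..<N} \<and> card Z = m})"
proof -
  define U where "U = {..<N}"
  define Sl where "Sl = {Z. Z \<subseteq> U \<and> card Z = m}"
  define S where "S = \<A> \<inter> Sl"
  define Perms where "Perms = {\<sigma>. \<sigma> permutes U}"
  define cnt where "cnt = (\<lambda>Q W. card {\<sigma>\<in>Perms. \<sigma> ` Q = W})"
  define Qs where "Qs = (\<lambda>i. {i * m..<Suc i * m})"
  have finU: "finite U" unfolding U_def by simp
  have finSl: "finite Sl" unfolding Sl_def using finU by (simp add: finite_subset[of _ "Pow U"] subset_eq)
  have finS: "finite S" unfolding S_def using finSl by simp
  have finP: "finite Perms" unfolding Perms_def using finite_permutations[OF finU] .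
  have cardP: "card Perms = fact N" unfolding Perms_def U_def by (rule card_permutations) simp_all
  have img: "\<sigma> ` Q \<in> Sl" if "\<sigma> \<in> Perms" "Q \<in> Sl" for \<sigma> Q
  proof -
    have sp: "\<sigma> permutes U" using that unfolding Perms_def by simp
    have "\<sigma> ` Q \<subseteq> \<sigma> ` U" using that unfolding Sl_def by auto
    also have "\<sigma> ` U = U" using permutes_image[OF sp] .
    finally have "\<sigma> ` Q \<subseteq> U" .
    moreover have "card (\<sigma> ` Q) = card Q" using permutes_inj[OF sp] by (simp add: card_image inj_on_subset)
    ultimately show ?thesis using that unfolding Sl_def by simp
  qed
  have cnt_le: "cnt Q W \<le> cnt Q W'" if asm: "Q \<in> Sl" "W \<in> Sl" "W' \<in> Sl" for Q W W'
  proof -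
    have "W \<subseteq> U" "W' \<subseteq> U" "card W = card W'" using asm unfolding Sl_def by auto
    from perm_exists[OF finU this] obtain \<tau> where tau: "\<tau> permutes U" "\<tau> ` W = W'" by blast
    have injt: "inj \<tau>" using permutes_inj[OF tau(1)] .
    have "card {\<sigma>\<in>Perms. \<sigma> ` Q = W} \<le> card {\<sigma>\<in>Perms. \<sigma> ` Q = W'}"
    proof (rule card_inj_on_le)
      show "inj_on ((\<circ>) \<tau>) {\<sigma> \<in> Perms. \<sigma> ` Q = W}"
      proof (rule inj_onI)
        fix s1 s2 :: "nat \<Rightarrow> nat"
        assume eq: "\<tau> \<circ> s1 = \<tau> \<circ> s2"
        show "s1 = s2"
        proof
          fix x
          have "\<tau> (s1 x) = \<tau> (s2 x)" using eq by (metis comp_apply)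
          then show "s1 x = s2 x" by (rule injD[OF injt])
        qed
      qed
      show "(\<circ>) \<tau> ` {\<sigma> \<in> Perms. \<sigma> ` Q = W} \<subseteq> {\<sigma> \<in> Perms. \<sigma> ` Q = W'}"
      proof
        fix s assume "s \<in> (\<circ>) \<tau> ` {\<sigma> \<in> Perms. \<sigma> ` Q = W}"
        then obtain \<sigma> where sg: "\<sigma> \<in> Perms" "\<sigma> ` Q = W" "s = \<tau> \<circ> \<sigma>" by blast
        have "s permutes U" using permutes_compose[of \<sigma> U \<tau>] sg tau(1) unfolding Perms_def by simp
        moreover have "s ` Q = W'"
        proof -
          have "s ` Q = \<tau> ` (\<sigma> ` Q)" by (simp add: sg(3) image_image)
          then show ?thesis using sg(2) tau(2) by simp
        qed
        ultimately show "s \<in> {\<sigma> \<in> Perms. \<sigma> ` Q = W'}" unfolding Perms_def by simp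
      qed
      show "finite {\<sigma> \<in> Perms. \<sigma> ` Q = W'}" using finP by simp
    qed
    then show ?thesis unfolding cnt_def .
  qed
  have cnt_eq: "cnt Q W = cnt Q Q" if "Q \<in> Sl" "W \<in> Sl" for Q W
    using cnt_le[OF that(1) that(2) that(1)] cnt_le[OF that(1) that(1) that(2)] by simp
  have count_fib: "card {\<sigma>\<in>Perms. \<sigma> ` Q \<in> X} = card X * cnt Q Q" if QX: "Q \<in> Sl" "X \<subseteq> Sl" for Q X
  proof -
    have finX: "finite X" using QX(2) finSl finite_subset by blast
    have "card {\<sigma>\<in>Perms. \<sigma> ` Q \<in> X} = (\<Sum>\<sigma>\<in>Perms. if \<sigma> ` Q \<in> X then 1 else 0)"
      using finP by (rule card_filter_sum)
    also have "\<dots> = (\<Sum>\<sigma>\<in>Perms. \<Sum>W\<in>X. if \<sigma> ` Q = W then 1 else 0)"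
    proof (rule sum.cong[OF refl])
      fix \<sigma> assume "\<sigma> \<in> Perms"
      show "(if \<sigma> ` Q \<in> X then 1 else 0) = (\<Sum>W\<in>X. if \<sigma> ` Q = W then 1 else (0::nat))"
        using sum.delta'[OF finX, of "\<sigma> ` Q" "\<lambda>_. 1::nat"] by simp
    qed
    also have "\<dots> = (\<Sum>W\<in>X. \<Sum>\<sigma>\<in>Perms. if \<sigma> ` Q = W then 1 else 0)" by (rule sum.swap)
    also have "\<dots> = (\<Sum>W\<in>X. cnt Q W)"
    proof (rule sum.cong[OF refl])
      fix W assume "W \<in> X"
      show "(\<Sum>\<sigma>\<in>Perms. if \<sigma> ` Q = W then 1 else (0::nat)) = cnt Q W"
        unfolding cnt_def by (rule card_filter_sum[OF finP, symmetric])
    qed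
    also have "\<dots> = (\<Sum>W\<in>X. cnt Q Q)"
    proof (rule sum.cong[OF refl])
      fix W assume "W \<in> X"
      then show "cnt Q W = cnt Q Q" using cnt_eq[OF QX(1)] QX(2) by blast
    qed
    finally show ?thesis by simp
  qed
  have QsSl: "Qs i \<in> Sl" if "i < k" for i
  proof -
    have "Suc i * m \<le> k * m" using that by (intro mult_le_mono1) simp
    then show ?thesis unfolding Qs_def Sl_def U_def N_def by auto
  qed
  have allP: "fact N * card Sl = card Sl * card Perms" using cardP by simp
  have permsQ: "card Perms = card Sl * cnt (Qs i) (Qs i)" if "i < k" for i
  proof -
    have "{\<sigma>\<in>Perms. \<sigma> ` Qs i \<in> Sl} = Perms" using img QsSl[OF that] by blast
    then have "card Perms = card {\<sigma>\<in>Perms. \<sigma> ` Qs i \<in> Sl}" by simp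
    also have "\<dots> = card Sl * cnt (Qs i) (Qs i)" using count_fib[OF QsSl[OF that]] by simp
    finally show ?thesis .
  qed
  have unionQ: "(\<Union>i<k. Qs i) = U"
  proof
    show "(\<Union>i<k. Qs i) \<subseteq> U"
    proof
      fix x assume "x \<in> (\<Union>i<k. Qs i)"
      then obtain i where i: "i < k" "x < Suc i * m" unfolding Qs_def by auto
      have "Suc i * m \<le> k * m" using i by (intro mult_le_mono1) simp
      then show "x \<in> U" using i unfolding U_def N_def by simp
    qed
    show "U \<subseteq> (\<Union>i<k. Qs i)"
    proof
      fix x assume "x \<in> U"
      then have x: "x < k * m" unfolding U_def N_def by simp
      then have m0: "m > 0" by (cases m) auto
      have "x div m < k" using x m0 by (simp add: div_less_iff_less_mult)
      moreover have "x div m * m \<le> x" by (simp add: div_times_less_eq_dividend)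
      moreover have "x < Suc (x div m) * m" using m0 by (simp add: dividend_less_div_times)
      ultimately show "x \<in> (\<Union>i<k. Qs i)" unfolding Qs_def by (intro UN_I[of "x div m"]) auto
    qed
  qed
  have disjQ: "Qs i \<inter> Qs j = {}" if "i \<noteq> j" for i j
  proof (rule ccontr)
    assume "Qs i \<inter> Qs j \<noteq> {}"
    then obtain x where "x \<in> Qs i" "x \<in> Qs j" by blast
    then have x: "i * m \<le> x" "x < Suc i * m" "j * m \<le> x" "x < Suc j * m" unfolding Qs_def by auto
    show False
    proof (cases "i < j")
      case True
      then have "Suc i * m \<le> j * m" by (intro mult_le_mono1) simp
      then show False using x by simp
    next
      case False
      then have "Suc j * m \<le> i * m" using that by (intro mult_le_mono1) simp
      then show False using x by simp
    qed
  qed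
  have each: "1 \<le> (\<Sum>i<k. if \<sigma> ` Qs i \<in> S then 1 else (0::nat))" if sP: "\<sigma> \<in> Perms" for \<sigma>
  proof -
    have sp: "\<sigma> permutes U" using sP unfolding Perms_def by simp
    have "is_partition_k N k (\<lambda>i. \<sigma> ` Qs i)"
      unfolding is_partition_k_def
    proof (intro conjI allI impI)
      have "(\<Union>i<k. \<sigma> ` Qs i) = \<sigma> ` (\<Union>i<k. Qs i)" by (simp add: image_UN)
      also have "\<dots> = U" using unionQ permutes_image[OF sp] by simp
      finally show "(\<Union>i<k. \<sigma> ` Qs i) = {..<N}" unfolding U_def .
      fix i j assume "i < k" "j < k" "i \<noteq> j"
      then show "\<sigma> ` Qs i \<inter> \<sigma> ` Qs j = {}"
        using disjQ[of i j] permutes_inj[OF sp] by (simp add: image_Int[symmetric])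
    qed
    then obtain i where i: "i < k" "\<sigma> ` Qs i \<in> \<A>" using kl unfolding k_large_def N_def by blast
    then have "\<sigma> ` Qs i \<in> S" unfolding S_def using img[OF sP QsSl[OF i(1)]] by simp
    then have "(\<Sum>i\<in>{i}. if \<sigma> ` Qs i \<in> S then 1 else (0::nat)) \<le> (\<Sum>i<k. if \<sigma> ` Qs i \<in> S then 1 else (0::nat))"
      using i by (intro sum_mono2) auto
    then show ?thesis using \<open>\<sigma> ` Qs i \<in> S\<close> by simp
  qed
  have "card Perms = (\<Sum>\<sigma>\<in>Perms. (1::nat))" by simp
  also have "\<dots> \<le> (\<Sum>\<sigma>\<in>Perms. \<Sum>i<k. if \<sigma> ` Qs i \<in> S then 1 else (0::nat))"
    using each by (rule sum_mono)
  also have "\<dots> = (\<Sum>i<k. \<Sum>\<sigma>\<in>Perms. if \<sigma> ` Qs i \<in> S then 1 else (0::nat))" by (rule sum.swap)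
  also have "\<dots> = (\<Sum>i<k. card S * cnt (Qs i) (Qs i))"
  proof (intro sum.cong refl)
    fix i assume "i \<in> {..<k}"
    then have ik: "i < k" by simp
    have "(\<Sum>\<sigma>\<in>Perms. if \<sigma> ` Qs i \<in> S then 1 else (0::nat)) = card {\<sigma>\<in>Perms. \<sigma> ` Qs i \<in> S}"
      using card_filter_sum[OF finP] by simp
    also have "\<dots> = card S * cnt (Qs i) (Qs i)" using count_fib[OF QsSl[OF ik], of S] unfolding S_def by auto
    finally show "(\<Sum>\<sigma>\<in>Perms. if \<sigma> ` Qs i \<in> S then 1 else (0::nat)) = card S * cnt (Qs i) (Qs i)" .
  qed
  finally have A: "card Perms \<le> (\<Sum>i<k. card S * cnt (Qs i) (Qs i))" .
  have "card Sl * card Perms \<le> (\<Sum>i<k. card S * (card Sl * cnt (Qs i) (Qs i)))"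
    using mult_le_mono2[OF A, of "card Sl"] by (simp add: sum_distrib_left algebra_simps)
  also have "\<dots> = (\<Sum>i<k. card S * card Perms)" using permsQ by (intro sum.cong) auto
  also have "\<dots> = (k * card S) * card Perms" by simp
  finally have "card Sl * card Perms \<le> (k * card S) * card Perms" .
  moreover have "card Perms > 0" using cardP by simp
  ultimately have "card Sl \<le> k * card S" by simp
  then show ?thesis unfolding Sl_def S_def U_def .
qed

lemma Cc_bound:
  assumes h: "0 \<le> h"
  shows "Cc h \<le> exp (h^2 / 4)"
proof -
  have H: "- h * (1/2) + ln (1 + (1/2) * (exp h - 1)) \<le> h^2 / 8"
    using Hoeffdings_lemma_aux[of h "1/2"] h by simp
  define A where "A = (1 + exp h) / 2"
  have Apos: "A > 0" unfolding A_def by (simp add: add_pos_pos)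
  have "1 + (1/2) * (exp h - 1) = A" unfolding A_def by (simp add: field_simps)
  then have "ln A \<le> h / 2 + h^2 / 8" using H by simp
  then have "A \<le> exp (h / 2 + h^2 / 8)" using Apos by (metis exp_le_cancel_iff exp_ln)
  then have "A^2 \<le> (exp (h / 2 + h^2 / 8))^2" using Apos by (intro power_mono) auto
  also have "\<dots> = exp (h + h^2 / 4)" by (simp add: exp_double[symmetric] power2_eq_square exp_add[symmetric] field_simps)
  also have "\<dots> = exp h * exp (h^2 / 4)" by (simp add: exp_add)
  finally have "A^2 \<le> exp h * exp (h^2 / 4)" .
  moreover have "Cc h * exp h = A^2" unfolding Cc_def A_def by (simp add: power2_eq_square field_simps)
  ultimately have "Cc h * exp h \<le> exp (h^2 / 4) * exp h" by (simp only: mult.commute)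
  then show ?thesis by (rule mult_right_le_imp_le) simp
qed

lemma g_limit:
  fixes \<delta> :: real and k :: nat
  assumes "\<delta> > 0"
  shows "(\<lambda>N::nat. real k * (real N + 1)^2 * exp (-(\<delta>^2) * real N)) \<longlonglongrightarrow> 0"
  using assms by real_asymp


theorem theorem2p9:
  fixes k :: nat and \<delta> :: real
  assumes "k \<ge> 1" and "\<delta> > 0"
  shows "\<forall>\<epsilon>::real. \<epsilon> > 0 \<longrightarrow> (\<exists>N0::nat. \<forall>N \<ge> N0. \<forall>\<A>.
           k dvd N \<longrightarrow> \<A> \<subseteq> Pow {..<N} \<longrightarrow> k_large k N \<A> \<longrightarrow> upward_closed N \<A> \<longrightarrow>
           measure_pmf.prob (pmf_of_set {Z. Z \<subseteq> {..<N} \<and> card Z = N div k})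
             {Z. \<exists>A \<subseteq> {..<N}. real (card A) < \<delta> * real N \<and> A \<union> Z \<in> \<A>} \<ge> 1 - \<epsilon>)"
proof (intro allI impI)
  fix \<epsilon> :: real assume \<epsilon>: "\<epsilon> > 0"
  define g where "g = (\<lambda>N::nat. real k * (real N + 1)^2 * exp (-(\<delta>^2) * real N))"
  have "g \<longlonglongrightarrow> 0" unfolding g_def using g_limit[OF assms(2)] .
  then have "eventually (\<lambda>N. g N < \<epsilon>) sequentially" using \<epsilon> by (rule order_tendstoD)
  then obtain N1 where N1: "\<And>N. N \<ge> N1 \<Longrightarrow> g N < \<epsilon>" by (auto simp: eventually_sequentially)
  show "\<exists>N0::nat. \<forall>N \<ge> N0. \<forall>\<A>.
           k dvd N \<longrightarrow> \<A> \<subseteq> Pow {..<N} \<longrightarrow> k_large k N \<A> \<longrightarrow> upward_closed N \<A> \<longrightarrow>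
           measure_pmf.prob (pmf_of_set {Z. Z \<subseteq> {..<N} \<and> card Z = N div k})
             {Z. \<exists>A \<subseteq> {..<N}. real (card A) < \<delta> * real N \<and> A \<union> Z \<in> \<A>} \<ge> 1 - \<epsilon>"
  proof (intro exI[of _ "max N1 1"] allI impI)
    fix N :: nat and \<A> :: "nat set set"
    assume N: "max N1 1 \<le> N" and kd: "k dvd N" and AP: "\<A> \<subseteq> Pow {..<N}"
      and kl: "k_large k N \<A>" and up: "upward_closed N \<A>"
    define m where "m = N div k"
    have Nkm: "N = k * m" unfolding m_def using kd by simp
    have N1': "N \<ge> 1" "N \<ge> N1" using N by auto
    have m1: "m \<ge> 1" using Nkm N1'(1) by (cases m) auto
    have mN: "m \<le> N" using Nkm assms(1) by simp
    define U where "U = {..<N}"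
    define Sl where "Sl = {Z. Z \<subseteq> {..<N} \<and> card Z = N div k}"
    define G where "G = {Z. \<exists>A \<subseteq> {..<N}. real (card A) < \<delta> * real N \<and> A \<union> Z \<in> \<A>}"
    define S where "S = \<A> \<inter> Sl"
    define T where "T = {Z \<in> Sl. \<forall>W\<in>S. \<delta> * real N \<le> real (card (W - Z))}"
    have SlU: "Sl = {Z. Z \<subseteq> U \<and> card Z = m}" unfolding Sl_def U_def m_def by simp
    have finU: "finite U" "card U = N" unfolding U_def by auto
    have finSl: "finite Sl" unfolding SlU using finU by (simp add: finite_subset[of _ "Pow U"] subset_eq)
    have cardSl: "card Sl = N choose m" unfolding SlU using n_subsets[OF finU(1)] finU(2) by simp
    have Slpos: "card Sl > 0" using cardSl mN by simp
    have dens: "card Sl \<le> k * card S"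
      using slice_density[OF assms(1), of m \<A>] kl unfolding S_def SlU U_def Nkm by simp
    have Sne: "S \<noteq> {}" using dens Slpos by auto
    have SPow: "S \<subseteq> Pow U" "T \<subseteq> Pow U" unfolding S_def T_def SlU by auto
    have finS: "finite S" "finite T" using SPow finU by (auto intro: finite_subset)
    have TSl: "T \<subseteq> Sl" unfolding T_def by auto
    have SlG: "Sl - T \<subseteq> G"
    proof
      fix Z assume Z: "Z \<in> Sl - T"
      then have ZSl: "Z \<in> Sl" and ZT: "Z \<notin> T" by auto
      have "\<not> (\<forall>W\<in>S. \<delta> * real N \<le> real (card (W - Z)))" using ZSl ZT unfolding T_def by blast
      then obtain W where W: "W \<in> S" "real (card (W - Z)) < \<delta> * real N" by (auto simp: not_le)
      have WA: "W \<in> \<A>" and WU: "W \<subseteq> {..<N}" and ZU: "Z \<subseteq> {..<N}" using W(1) ZSl unfolding S_def Sl_def by auto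
      have sub1: "W \<subseteq> (W - Z) \<union> Z" by blast
      have sub2: "(W - Z) \<union> Z \<subseteq> {..<N}" using WU ZU by blast
      have "(W - Z) \<union> Z \<in> \<A>" using up WA sub1 sub2 unfolding upward_closed_def by blast
      moreover have "W - Z \<subseteq> {..<N}" using WU by blast
      ultimately show "Z \<in> G" unfolding G_def using W(2) by blast
    qed
    define p where "p = real m / real N"
    define l where "l = 2 * \<delta>"
    define q where "q = p ^ m * (1 - p) ^ (N - m)"
    have p01: "0 \<le> p" "p \<le> 1" unfolding p_def using mN N1'(1) by auto
    have q0: "q \<ge> 0" unfolding q_def using p01 by simp
    have l0: "l \<ge> 0" unfolding l_def using assms(2) by simp
    have wtq: "wt p U x = q" if "x \<in> Sl" for x using that finU unfolding wt_def q_def SlU by simp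
    have muSq: "muS p U S = real (card S) * q"
    proof -
      have "muS p U S = sum (wt p U) (Pow U \<inter> S)" unfolding muS_def
        using sum.inter_restrict[of "Pow U" "wt p U" S] finU by simp
      also have "Pow U \<inter> S = S" using SPow by auto
      also have "sum (wt p U) S = sum (\<lambda>_. q) S" using wtq unfolding S_def by (intro sum.cong) auto
      finally show ?thesis by simp
    qed
    have hd: "real (hdist x S) \<ge> \<delta> * real N" if "x \<in> T" for x
    proof -
      obtain z where z: "z \<in> S" "hdist x S = card ((x - z) \<union> (z - x))" using hdist_in[OF finS(1) Sne] by blast
      have "finite ((x - z) \<union> (z - x))" using z that SPow finU by (meson PowD finite_Diff finite_UnI finite_subset subsetD)
      then have "card (z - x) \<le> card ((x - z) \<union> (z - x))" by (intro card_mono) auto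
      moreover have "\<delta> * real N \<le> real (card (z - x))" using that z unfolding T_def by auto
      ultimately show ?thesis using z by simp
    qed
    have Fq: "real (card T) * q * exp (l * (\<delta> * real N)) \<le> Fexp l p U S"
    proof -
      have "real (card T) * q * exp (l * (\<delta> * real N)) = (\<Sum>x\<in>T. q * exp (l * (\<delta> * real N)))" by simp
      also have "\<dots> \<le> (\<Sum>x\<in>T. wt p U x * exp (l * real (hdist x S)))"
      proof (intro sum_mono)
        fix x assume x: "x \<in> T"
        have "exp (l * (\<delta> * real N)) \<le> exp (l * real (hdist x S))" using hd[OF x] l0 by (simp add: mult_left_mono)
        then show "q * exp (l * (\<delta> * real N)) \<le> wt p U x * exp (l * real (hdist x S))"
          using wtq x TSl q0 by (auto intro: mult_left_mono)
      qed
      also have "\<dots> \<le> Fexp l p U S" unfolding Fexp_def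
        using SPow finU p01 by (intro sum_mono2) (auto simp: wt_nonneg)
      finally show ?thesis .
    qed
    have conc': "muS p U S * Fexp l p U S \<le> Cc l ^ N"
      using conc[OF finU(1) SPow(1) Sne p01 l0] finU(2) by simp
    have "Cc l ^ N \<le> exp (l^2 / 4) ^ N" using Cc_bound[OF l0] Cc_pos[of l] by (intro power_mono) auto
    also have "\<dots> = exp (\<delta>^2 * real N)" unfolding l_def by (simp add: exp_of_nat_mult[symmetric] power2_eq_square mult.commute)
    finally have CcN: "Cc l ^ N \<le> exp (\<delta>^2 * real N)" .
    have key: "real (card S) * real (card T) * q^2 \<le> exp (-(\<delta>^2) * real N)"
    proof -
      have "real (card S) * q * (real (card T) * q * exp (l * (\<delta> * real N))) \<le> muS p U S * Fexp l p U S"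
        unfolding muSq using Fq q0 by (intro mult_left_mono) auto
      also have "\<dots> \<le> exp (\<delta>^2 * real N)" using conc' CcN by linarith
      finally have a: "(real (card S) * real (card T) * q^2) * exp (2 * (\<delta>^2 * real N)) \<le> exp (\<delta>^2 * real N)"
        unfolding l_def by (simp add: power2_eq_square algebra_simps)
      have "exp (2 * (\<delta>^2 * real N)) = exp (\<delta>^2 * real N) * exp (\<delta>^2 * real N)" by (simp add: exp_add[symmetric])
      then have "(real (card S) * real (card T) * q^2) * exp (\<delta>^2 * real N) * exp (\<delta>^2 * real N) \<le> 1 * exp (\<delta>^2 * real N)"
        using a by (simp add: algebra_simps)
      then have "(real (card S) * real (card T) * q^2) * exp (\<delta>^2 * real N) \<le> 1" by (rule mult_right_le_imp_le) simp
      then show ?thesis by (simp add: exp_minus field_simps)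
    qed
    have mode: "real (card Sl) * q \<ge> 1 / (real N + 1)"
      using binom_mode[of N m] N1'(1) mN cardSl unfolding q_def p_def by simp
    define X where "X = real (card Sl) * q"
    have "1 / (real N + 1) > 0" by simp
    then have Xpos: "X > 0" using mode unfolding X_def by linarith
    have Tb: "real (card T) \<le> g N * real (card Sl)"
    proof -
      have "real (card T) * X^2 = real (card T) * real (card Sl) * real (card Sl) * q^2"
        unfolding X_def by (simp add: power2_eq_square algebra_simps)
      also have "\<dots> \<le> real (card T) * (real k * real (card S)) * real (card Sl) * q^2"
      proof -
        have "real (card Sl) \<le> real k * real (card S)" using dens by (metis of_nat_le_iff of_nat_mult)
        then show ?thesis using q0 by (intro mult_right_mono mult_left_mono) auto
      qed
      also have "\<dots> = real k * real (card Sl) * (real (card S) * real (card T) * q^2)" by (simp add: algebra_simps)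
      also have "\<dots> \<le> real k * real (card Sl) * exp (-(\<delta>^2) * real N)" using key by (intro mult_left_mono) auto
      finally have b: "real (card T) * X^2 \<le> real k * real (card Sl) * exp (-(\<delta>^2) * real N)" .
      have X2: "X^2 * (real N + 1)^2 \<ge> 1"
      proof -
        have "X * (real N + 1) \<ge> 1" using mode unfolding X_def by (simp add: field_simps)
        then have "(X * (real N + 1))^2 \<ge> 1^2" by (intro power_mono) auto
        then show ?thesis by (simp add: power_mult_distrib)
      qed
      have "real (card T) \<le> real (card T) * (X^2 * (real N + 1)^2)" using X2 by (simp add: mult_le_cancel_left1)
      also have "\<dots> = (real (card T) * X^2) * (real N + 1)^2" by (simp add: algebra_simps)
      also have "\<dots> \<le> (real k * real (card Sl) * exp (-(\<delta>^2) * real N)) * (real N + 1)^2"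
        using b by (intro mult_right_mono) auto
      also have "\<dots> = g N * real (card Sl)" unfolding g_def by (simp add: algebra_simps)
      finally show ?thesis .
    qed
    have Slne: "Sl \<noteq> {}" using Slpos by auto
    have prob: "measure_pmf.prob (pmf_of_set Sl) G = real (card (Sl \<inter> G)) / real (card Sl)"
      by (rule measure_pmf_of_set[OF Slne finSl])
    have "card (Sl - T) \<le> card (Sl \<inter> G)" using SlG finSl by (intro card_mono) auto
    moreover have "card (Sl - T) = card Sl - card T" using TSl finS by (simp add: card_Diff_subset)
    moreover have "card T \<le> card Sl" using TSl finSl by (simp add: card_mono)
    ultimately have c: "real (card Sl) - real (card T) \<le> real (card (Sl \<inter> G))" by linarith
    have "1 - \<epsilon> \<le> 1 - g N" using N1[OF N1'(2)] by simp
    also have "\<dots> \<le> (real (card Sl) - real (card T)) / real (card Sl)"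
      using Tb Slpos by (simp add: field_simps)
    also have "\<dots> \<le> real (card (Sl \<inter> G)) / real (card Sl)" using c Slpos by (intro divide_right_mono) auto
    finally have "1 - \<epsilon> \<le> measure_pmf.prob (pmf_of_set Sl) G" using prob by simp
    then show "measure_pmf.prob (pmf_of_set {Z. Z \<subseteq> {..<N} \<and> card Z = N div k})
             {Z. \<exists>A \<subseteq> {..<N}. real (card A) < \<delta> * real N \<and> A \<union> Z \<in> \<A>} \<ge> 1 - \<epsilon>"
      unfolding Sl_def G_def .
  qed
qed

end
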